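(* Let $\phi(t,x)=(2\pi)^{-1/2}\int_{\mathbb{R}} e^{i(kx-\hbar k^2t/(2m))}\varphi(k)\,dk$ be a freely evolving wave packet, where $\varphi\in C^1(\mathbb{R})$ has $\mathrm{supp}\,\varphi\subseteq[a_1,a_2]$ with $0<a_1<a_2$. Let $j(t,x)=\frac{\hbar}{m}\mathrm{Im}\big(\overline{\phi(t,x)}\,\partial_x\phi(t,x)\big)$ be its probability current density. Then for every fixed $\tau\in\mathbb{R}$, \[ \lim_{M\to\infty}\int_{-M}^{\tau} j(s,M)\,ds=0 . \]
   Context: $\hbar,m>0$ are constants; $\phi$ is the solution of the free Schrödinger equation $i\hbar\partial_t\phi=-\frac{\hbar^2}{2m}\partial_x^2\phi$ with initial Fourier transform $\varphi$. *)

theory Defs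
  imports "HOL-Analysis.Analysis"
begin

definition free_packet :: "real \<Rightarrow> real \<Rightarrow> (real \<Rightarrow> complex) \<Rightarrow> real \<Rightarrow> real \<Rightarrow> complex" where
  "free_packet hbar m vphi t x =
     complex_of_real (1 / sqrt (2 * pi)) *
     integral UNIV (\<lambda>k. exp (\<i> * complex_of_real (k * x - hbar * k\<^sup>2 * t / (2 * m))) * vphi k)"

definition prob_current :: "real \<Rightarrow> real \<Rightarrow> (real \<Rightarrow> complex) \<Rightarrow> real \<Rightarrow> real \<Rightarrow> real" where
  "prob_current hbar m vphi t x =
     hbar / m * Im (cnj (free_packet hbar m vphi t x) *
        vector_derivative (\<lambda>y. free_packet hbar m vphi t y) (at x))"

end

theory Submission imports Defs begin

lemma exp_phase_deriv:
  fixes x b :: real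
  shows "((\<lambda>k. exp (\<i> * of_real (k*x - b*k^2))) has_vector_derivative
          (\<i> * of_real (x - 2*b*k)) * exp (\<i> * of_real (k*x - b*k^2))) (at k within S)"
proof -
  have "((\<lambda>k. k*x - b*k^2) has_real_derivative (x - 2*b*k)) (at k)"
    by (auto intro!: derivative_eq_intros)
  then have "((\<lambda>k. \<i> * of_real (k*x - b*k^2)) has_vector_derivative \<i> * of_real (x - 2*b*k)) (at k)"
    by (intro has_vector_derivative_mult_right has_vector_derivative_of_real)
  from field_vector_diff_chain_at[OF this DERIV_exp]
  show ?thesis by (auto simp: o_def intro: has_vector_derivative_at_within)
qed

lemma ibp_bound:
  fixes g g' :: "real \<Rightarrow> complex" and x b L G0 G1 a1 a2 :: real
  assumes ab: "a1 \<le> a2"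
  and gd: "\<And>k. k \<in> {a1..a2} \<Longrightarrow> (g has_vector_derivative g' k) (at k within {a1..a2})"
  and gc: "continuous_on {a1..a2} g'"
  and g1: "g a1 = 0" and g2: "g a2 = 0"
  and L: "L > 0" "\<And>k. k \<in> {a1..a2} \<Longrightarrow> L \<le> x - 2*b*k"
  and G0: "\<And>k. k \<in> {a1..a2} \<Longrightarrow> norm (g k) \<le> G0"
  and G1: "\<And>k. k \<in> {a1..a2} \<Longrightarrow> norm (g' k) \<le> G1"
  shows "norm (integral {a1..a2} (\<lambda>k. exp (\<i> * of_real (k*x - b*k^2)) * g k))
           \<le> (a2-a1) * (G1/L + 2*\<bar>b\<bar>*G0/L^2)"
proof -
  define P where "P k = x - 2*b*k" for k
  define e where "e k = exp (\<i> * of_real (k*x - b*k^2))" for k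
  define h where "h k = - \<i> * g' k * of_real (1 / P k) - 2 * \<i> * of_real b * g k * of_real (1 / (P k)^2)" for k
  define F where "F k = e k * g k * of_real (1 / P k) * (- \<i>)" for k
  have Ppos: "P k > 0" if "k \<in> {a1..a2}" for k
    using L(1) L(2)[OF that] by (simp add: P_def)
  have ed: "(e has_vector_derivative (\<i> * of_real (P k)) * e k) (at k within S)" for k S
    unfolding e_def P_def by (rule exp_phase_deriv)
  have Fd: "(F has_vector_derivative (e k * g k + e k * h k)) (at k within {a1..a2})"
    if k: "k \<in> {a1..a2}" for k
  proof -
    have Pd: "((\<lambda>k. 1 / P k) has_field_derivative (2*b / (P k)^2)) (at k within {a1..a2})"
      unfolding P_def using Ppos[OF k] unfolding P_def
      by (auto intro!: derivative_eq_intros simp: power2_eq_square field_simps)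
    have "(F has_vector_derivative
        ((e k * (g' k) + (\<i> * of_real (P k)) * e k * g k) * of_real (1 / P k) * (- \<i>)
          + e k * g k * of_real (2*b / (P k)^2) * (- \<i>))) (at k within {a1..a2})"
      unfolding F_def
      apply (rule has_vector_derivative_eq_rhs)
       apply (rule has_vector_derivative_mult_left)
       apply (rule has_vector_derivative_mult)
        apply (rule has_vector_derivative_mult)
         apply (rule ed)
        apply (rule gd[OF k])
       apply (rule has_vector_derivative_of_real[OF Pd])
      by (simp add: algebra_simps)
    moreover have "((e k * (g' k) + (\<i> * of_real (P k)) * e k * g k) * of_real (1 / P k) * (- \<i>)
          + e k * g k * of_real (2*b / (P k)^2) * (- \<i>)) = e k * g k + e k * h k"
      using Ppos[OF k] unfolding h_def
      by (simp add: field_simps power2_eq_square)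
    ultimately show ?thesis by simp
  qed
  have FTC: "((\<lambda>k. e k * g k + e k * h k) has_integral (F a2 - F a1)) {a1..a2}"
    using ab Fd by (intro fundamental_theorem_of_calculus) auto
  have F0: "F a2 - F a1 = 0" by (simp add: F_def g1 g2)
  have gcont: "continuous_on {a1..a2} g"
    using gd by (rule continuous_on_vector_derivative)
  have econt: "continuous_on {a1..a2} e"
    unfolding e_def by (intro continuous_intros)
  have Pcont: "continuous_on {a1..a2} P"
    unfolding P_def by (intro continuous_intros)
  have hcont: "continuous_on {a1..a2} h"
    unfolding h_def using Ppos
    by (intro continuous_intros gc gcont Pcont) (fastforce+)
  have ehint: "(\<lambda>k. e k * h k) integrable_on {a1..a2}"
    by (intro integrable_continuous_interval continuous_intros econt hcont)
  have "((\<lambda>k. (e k * g k + e k * h k) - e k * h k) has_integral (0 - integral {a1..a2} (\<lambda>k. e k * h k))) {a1..a2}"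
    using has_integral_diff[OF FTC[unfolded F0] integrable_integral[OF ehint]] .
  hence int1: "((\<lambda>k. e k * g k) has_integral (- integral {a1..a2} (\<lambda>k. e k * h k))) {a1..a2}"
    by simp
  have hb: "norm (e k * h k) \<le> G1/L + 2*\<bar>b\<bar>*G0/L^2" if k: "k \<in> {a1..a2}" for k
  proof -
    have ne: "norm (e k) = 1" unfolding e_def by (simp add: norm_exp_i_times)
    have P: "P k > 0" "L \<le> P k" using Ppos[OF k] L(2)[OF k] by (auto simp: P_def)
    have "norm (h k) \<le> norm (g' k) * (1 / P k) + 2 * \<bar>b\<bar> * norm (g k) * (1 / (P k)^2)"
      unfolding h_def using P
      by (rule_tac order_trans[OF norm_triangle_ineq4]) (simp add: norm_mult norm_divide norm_power abs_of_pos)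
    also have "\<dots> \<le> G1 * (1/L) + 2*\<bar>b\<bar>*G0 * (1/L^2)"
    proof (intro add_mono mult_mono mult_left_mono)
      show "norm (g' k) \<le> G1" "norm (g k) \<le> G0" using G1[OF k] G0[OF k] .
      show "1 / P k \<le> 1 / L" using P L(1) by (simp add: frac_le)
      show "1 / (P k)^2 \<le> 1 / L^2" using P L(1) by (simp add: frac_le power_mono)
    qed (use order_trans[OF norm_ge_zero G1[OF k]] order_trans[OF norm_ge_zero G0[OF k]] P in auto)
    finally show ?thesis by (simp add: ne norm_mult)
  qed
  have "norm (integral {a1..a2} (\<lambda>k. e k * h k)) \<le> (G1/L + 2*\<bar>b\<bar>*G0/L^2) * measure lborel {a1..a2}"
  proof (rule has_integral_bound_real[where S="{}", OF _ _ integrable_integral[OF ehint]])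
    show "0 \<le> G1/L + 2*\<bar>b\<bar>*G0/L^2"
      using order_trans[OF norm_ge_zero hb[of a1]] ab by auto
  qed (use hb in \<open>auto simp: norm_mult\<close>)
  moreover have "integral {a1..a2} (\<lambda>k. e k * g k) = - integral {a1..a2} (\<lambda>k. e k * h k)"
    using int1 by (rule integral_unique)
  ultimately show ?thesis using ab by (simp add: e_def mult.commute)
qed


lemma exp_phase_deriv_x:
  fixes k B :: real
  shows "((\<lambda>y. exp (\<i> * of_real (k*y - B*k^2))) has_vector_derivative
          (\<i> * of_real k) * exp (\<i> * of_real (k*y - B*k^2))) (at y within S)"
proof -
  have "((\<lambda>y. k*y - B*k^2) has_real_derivative k) (at y)"
    by (auto intro!: derivative_eq_intros)
  then have "((\<lambda>y. \<i> * of_real (k*y - B*k^2)) has_vector_derivative \<i> * of_real k) (at y)"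
    by (intro has_vector_derivative_mult_right has_vector_derivative_of_real)
  from field_vector_diff_chain_at[OF this DERIV_exp]
  show ?thesis by (auto simp: o_def intro: has_vector_derivative_at_within)
qed

theorem mainTheorem3:
  fixes hbar m a1 a2 tau :: real and vphi :: "real \<Rightarrow> complex"
  assumes "hbar > 0" and "m > 0"
    and "vphi C1_differentiable_on UNIV"
    and "0 < a1" and "a1 < a2"
    and "\<forall>k. k \<notin> {a1..a2} \<longrightarrow> vphi k = 0"
  shows "((\<lambda>M. integral {-M..tau} (\<lambda>s. prob_current hbar m vphi s M)) \<longlongrightarrow> 0) at_top"
proof -
  note hb = assms(1) and mp = assms(2) and a1p = assms(4) and a12 = assms(5)
  note supp = assms(6)
  obtain D where Dd: "\<And>x. (vphi has_vector_derivative D x) (at x)" and Dc: "continuous_on UNIV D"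
    using assms(3) unfolding C1_differentiable_on_def by blast
  have vc: "continuous_on UNIV vphi"
    by (rule continuous_on_vector_derivative) (use Dd in auto)
  have v1: "vphi a1 = 0"
  proof -
    have "(vphi \<longlongrightarrow> vphi a1) (at_left a1)"
      using vc by (metis UNIV_I continuous_on_def filterlim_at_split at_within_open open_UNIV)
    moreover have "(vphi \<longlongrightarrow> 0) (at_left a1)"
    proof (rule tendsto_eventually)
      show "\<forall>\<^sub>F x in at_left a1. vphi x = 0"
        using eventually_at_left_real[of "a1 - 1" a1] supp
        by (auto elim!: eventually_mono)
    qed
    ultimately show ?thesis using tendsto_unique trivial_limit_at_left_real by blast
  qed
  have v2: "vphi a2 = 0"
  proof -
    have "(vphi \<longlongrightarrow> vphi a2) (at_right a2)"
      using vc by (metis UNIV_I continuous_on_def filterlim_at_split at_within_open open_UNIV)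
    moreover have "(vphi \<longlongrightarrow> 0) (at_right a2)"
    proof (rule tendsto_eventually)
      show "\<forall>\<^sub>F x in at_right a2. vphi x = 0"
        using eventually_at_right_real[of a2 "a2 + 1"] supp
        by (auto elim!: eventually_mono)
    qed
    ultimately show ?thesis using tendsto_unique trivial_limit_at_right_real by blast
  qed
  define c where "c = complex_of_real (1 / sqrt (2 * pi))"
  define bb where "bb t = hbar * t / (2 * m)" for t
  define e where "e t x k = exp (\<i> * of_real (k*x - bb t * k^2))" for t x k
  define g2 where "g2 k = \<i> * of_real k * vphi k" for k
  define g2' where "g2' k = \<i> * (of_real k * D k + vphi k)" for k
  define I1 where "I1 t x = integral {a1..a2} (\<lambda>k. e t x k * vphi k)" for t x
  define I2 where "I2 t x = integral {a1..a2} (\<lambda>k. e t x k * g2 k)" for t x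
  have fp: "free_packet hbar m vphi t x = c * I1 t x" for t x
  proof -
    have "(\<lambda>k. exp (\<i> * complex_of_real (k * x - hbar * k\<^sup>2 * t / (2 * m))) * vphi k)
        = (\<lambda>k. if k \<in> {a1..a2} then e t x k * vphi k else 0)"
      using supp by (auto simp: e_def bb_def algebra_simps)
    note eq = this
    show ?thesis
      unfolding free_packet_def c_def I1_def eq integral_restrict_UNIV by (rule refl)
  qed
  have fpd: "((\<lambda>y. free_packet hbar m vphi t y) has_vector_derivative c * I2 t x) (at x)" for t x
  proof -
    have "((\<lambda>y. integral (cbox a1 a2) (\<lambda>k. e t y k * vphi k)) has_vector_derivative
            integral (cbox a1 a2) (\<lambda>k. e t x k * g2 k)) (at x within UNIV)"
    proof (rule leibniz_rule_vector_derivative)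
      fix y k
      show "((\<lambda>y. e t y k * vphi k) has_vector_derivative e t y k * g2 k) (at y within UNIV)"
        unfolding e_def g2_def
        by (rule has_vector_derivative_eq_rhs, rule has_vector_derivative_mult_left,
            rule exp_phase_deriv_x) (simp add: algebra_simps)
    next
      fix y
      show "(\<lambda>k. e t y k * vphi k) integrable_on cbox a1 a2"
        unfolding e_def
        by (intro integrable_continuous continuous_intros continuous_on_subset[OF vc]) auto
    next
      have "continuous_on UNIV (\<lambda>p. vphi (snd p))"
        by (rule continuous_on_compose2[OF vc continuous_on_snd]) auto
      then have "continuous_on UNIV (\<lambda>p::real\<times>real. e t (fst p) (snd p) * g2 (snd p))"
        unfolding e_def g2_def by (intro continuous_intros) auto
      then show "continuous_on (UNIV \<times> cbox a1 a2) (\<lambda>(y, k). e t y k * g2 k)"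
        unfolding case_prod_beta by (rule continuous_on_subset) auto
    qed auto
    then show ?thesis
      unfolding fp I1_def I2_def cbox_interval
      by (auto intro!: has_vector_derivative_mult_right)
  qed
  have pc: "prob_current hbar m vphi t x = hbar / m * Im (cnj (c * I1 t x) * (c * I2 t x))" for t x
    unfolding prob_current_def fp[symmetric] using vector_derivative_at[OF fpd] by simp
  have cI: "continuous_on {a1..a2} f" if "continuous_on UNIV f" for f :: "real \<Rightarrow> complex"
    using that by (rule continuous_on_subset) auto
  obtain G0 where G0: "G0 \<ge> 0" "\<And>k. k \<in> {a1..a2} \<Longrightarrow> norm (vphi k) \<le> G0"
    using continuous_on_compact_bound[OF compact_Icc cI[OF vc]] by blast
  obtain G1 where G1: "G1 \<ge> 0" "\<And>k. k \<in> {a1..a2} \<Longrightarrow> norm (D k) \<le> G1"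
    using continuous_on_compact_bound[OF compact_Icc cI[OF Dc]] by blast
  have g2c: "continuous_on UNIV g2" unfolding g2_def by (intro continuous_intros vc)
  have g2'c: "continuous_on UNIV g2'" unfolding g2'_def by (intro continuous_intros vc Dc)
  obtain H0 where H0: "H0 \<ge> 0" "\<And>k. k \<in> {a1..a2} \<Longrightarrow> norm (g2 k) \<le> H0"
    using continuous_on_compact_bound[OF compact_Icc cI[OF g2c]] by blast
  obtain H1 where H1: "H1 \<ge> 0" "\<And>k. k \<in> {a1..a2} \<Longrightarrow> norm (g2' k) \<le> H1"
    using continuous_on_compact_bound[OF compact_Icc cI[OF g2'c]] by blast
  have g2d: "(g2 has_vector_derivative g2' k) (at k within S)" for k S
  proof -
    have "((\<lambda>k. of_real k :: complex) has_vector_derivative 1) (at k within S)"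
      by (rule has_vector_derivative_eq_rhs[OF has_vector_derivative_of_real[OF DERIV_ident]]) simp
    from has_vector_derivative_mult_right[OF
        has_vector_derivative_mult[OF this has_vector_derivative_at_within[OF Dd[of k]]], of "\<i>"]
    show ?thesis unfolding g2_def g2'_def by (simp add: mult.assoc)
  qed
  define K1 where "K1 = 2*G1 + 4*hbar*G0/m"
  define K2 where "K2 = 2*H1 + 4*hbar*H0/m"
  define M0 where "M0 = max 1 (max \<bar>tau\<bar> (2*hbar*\<bar>tau\<bar>*a2/m))"
  have cond: "M/2 \<le> M - 2 * bb s * k"
    if M: "M0 \<le> M" and s: "-M \<le> s" "s \<le> tau" and k: "a1 \<le> k" "k \<le> a2" for M s k
  proof -
    have eq: "2 * bb s * k = hbar * s * k / m" by (simp add: bb_def)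
    show ?thesis
    proof (cases "s \<le> 0")
      case True
      have "hbar * s * k \<le> 0"
        using True hb k a1p by (simp add: mult_nonpos_nonneg mult_nonneg_nonpos)
      then have "hbar * s * k / m \<le> 0" using mp by (simp add: divide_nonpos_pos)
      moreover have "M \<ge> 1" using M by (auto simp: M0_def)
      ultimately show ?thesis unfolding eq by linarith
    next
      case False
      have "hbar * s * k \<le> hbar * \<bar>tau\<bar> * a2"
        using False hb k a1p s by (intro mult_mono) auto
      then have "hbar * s * k / m \<le> hbar * \<bar>tau\<bar> * a2 / m" using mp by (simp add: divide_right_mono)
      also have "\<dots> \<le> M/2" using M by (auto simp: M0_def mult_ac)
      finally show ?thesis unfolding eq by linarith
    qed
  qed
  have bnd: "(a2-a1) * (Y1/(M/2) + 2*\<bar>bb s\<bar>*Y0/(M/2)^2) \<le> (a2-a1) * ((2*Y1 + 4*hbar*Y0/m)/M)"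
    if M: "M0 \<le> M" and s: "-M \<le> s" "s \<le> tau" and Y: "Y0 \<ge> 0" for M s Y0 Y1
  proof -
    have Mp: "M > 0" "M \<ge> \<bar>tau\<bar>" using M by (auto simp: M0_def)
    have "\<bar>s\<bar> \<le> M" using s Mp by auto
    have "2*\<bar>bb s\<bar> = hbar * \<bar>s\<bar> / m" using hb mp by (simp add: bb_def abs_mult)
    then have "2*\<bar>bb s\<bar>*Y0/(M/2)^2 = 4 * (hbar * \<bar>s\<bar> * Y0) / (m * M^2)"
      by (simp add: power2_eq_square field_simps)
    also have "\<dots> \<le> 4 * (hbar * M * Y0) / (m * M^2)"
      using \<open>\<bar>s\<bar> \<le> M\<close> Y hb mp Mp
      by (intro divide_right_mono mult_left_mono mult_right_mono) auto
    also have "\<dots> = 4*hbar*Y0/m/M" using Mp mp by (simp add: power2_eq_square field_simps)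
    finally have "Y1/(M/2) + 2*\<bar>bb s\<bar>*Y0/(M/2)^2 \<le> (2*Y1 + 4*hbar*Y0/m)/M"
      using Mp by (simp add: add_divide_distrib mult.commute)
    then show ?thesis using a12 by (intro mult_left_mono) auto
  qed
  have I1b: "norm (I1 s M) \<le> (a2-a1) * (K1/M)"
    if M: "M0 \<le> M" and s: "-M \<le> s" "s \<le> tau" for M s
  proof -
    have Mp: "M > 0" using M by (auto simp: M0_def)
    have "norm (I1 s M) \<le> (a2-a1) * (G1/(M/2) + 2*\<bar>bb s\<bar>*G0/(M/2)^2)"
      unfolding I1_def e_def
      by (rule ibp_bound[where g'=D])
        (use a12 Mp cond[OF M s] G0 G1 v1 v2 cI[OF Dc] Dd in \<open>auto intro: has_vector_derivative_at_within\<close>)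
    also have "\<dots> \<le> (a2-a1) * (K1/M)" unfolding K1_def by (rule bnd[OF M s G0(1)])
    finally show ?thesis .
  qed
  have I2b: "norm (I2 s M) \<le> (a2-a1) * (K2/M)"
    if M: "M0 \<le> M" and s: "-M \<le> s" "s \<le> tau" for M s
  proof -
    have Mp: "M > 0" using M by (auto simp: M0_def)
    have "norm (I2 s M) \<le> (a2-a1) * (H1/(M/2) + 2*\<bar>bb s\<bar>*H0/(M/2)^2)"
      unfolding I2_def e_def
      by (rule ibp_bound[where g=g2 and g'=g2'])
        (use a12 Mp cond[OF M s] H0 H1 cI[OF g2'c] g2d in \<open>auto simp: g2_def v1 v2\<close>)
    also have "\<dots> \<le> (a2-a1) * (K2/M)" unfolding K2_def by (rule bnd[OF M s H0(1)])
    finally show ?thesis .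
  qed
  define Cst where "Cst = hbar/m * (norm c)^2 * ((a2-a1)*K1) * ((a2-a1)*K2)"
  have K1p: "K1 \<ge> 0" unfolding K1_def using G0 G1 hb mp by auto
  have K2p: "K2 \<ge> 0" unfolding K2_def using H0 H1 hb mp by auto
  have Cp: "Cst \<ge> 0" unfolding Cst_def using K1p K2p hb mp a12 by auto
  have jb: "norm (prob_current hbar m vphi s M) \<le> Cst / M^2"
    if M: "M0 \<le> M" and s: "-M \<le> s" "s \<le> tau" for M s
  proof -
    have Mp: "M > 0" using M by (auto simp: M0_def)
    have "norm (prob_current hbar m vphi s M) = hbar/m * \<bar>Im (cnj (c * I1 s M) * (c * I2 s M))\<bar>"
      unfolding pc using hb mp by (simp add: abs_mult)
    also have "\<dots> \<le> hbar/m * norm (cnj (c * I1 s M) * (c * I2 s M))"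
      using hb mp by (intro mult_left_mono abs_Im_le_cmod) auto
    also have "\<dots> = hbar/m * (norm c)^2 * (norm (I1 s M) * norm (I2 s M))"
      by (simp add: norm_mult power2_eq_square)
    also have "\<dots> \<le> hbar/m * (norm c)^2 * (((a2-a1) * (K1/M)) * ((a2-a1) * (K2/M)))"
      using I1b[OF M s] I2b[OF M s] hb mp Mp K1p K2p a12
      by (intro mult_left_mono mult_mono) auto
    also have "\<dots> = Cst / M^2" unfolding Cst_def using Mp by (simp add: power2_eq_square field_simps)
    finally show ?thesis .
  qed
  have ev: "\<forall>\<^sub>F M in at_top. norm (integral {-M..tau} (\<lambda>s. prob_current hbar m vphi s M)) \<le> 2 * Cst / M"
    using eventually_ge_at_top[of M0]
  proof (rule eventually_mono)
    fix M assume M: "M0 \<le> M"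
    have Mp: "M > 0" "\<bar>tau\<bar> \<le> M" using M by (auto simp: M0_def)
    show "norm (integral {-M..tau} (\<lambda>s. prob_current hbar m vphi s M)) \<le> 2 * Cst / M"
    proof (cases "(\<lambda>s. prob_current hbar m vphi s M) integrable_on {-M..tau}")
      case True
      have "norm (integral {-M..tau} (\<lambda>s. prob_current hbar m vphi s M)) \<le> Cst / M^2 * measure lborel {-M..tau}"
        by (rule has_integral_bound_real[where S="{}", OF _ _ integrable_integral[OF True]])
           (use Cp jb[OF M] in auto)
      also have "\<dots> = Cst / M^2 * (tau + M)" using Mp by simp
      also have "\<dots> \<le> Cst / M^2 * (2 * M)" using Mp Cp by (intro mult_left_mono) auto
      also have "\<dots> = 2 * Cst / M" using Mp by (simp add: power2_eq_square)
      finally show ?thesis .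
    next
      case False
      then show ?thesis using Cp Mp by (simp add: not_integrable_integral)
    qed
  qed
  have lim: "((\<lambda>M. 2 * Cst / M) \<longlongrightarrow> 0) at_top"
    by (rule tendsto_divide_0[OF tendsto_const filterlim_at_top_imp_at_infinity[OF filterlim_ident]])
  show ?thesis by (rule Lim_null_comparison[OF ev lim])
qed

end
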